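(* Let $E$ be a finite set with $m=|E|\ge1$ and let $\mu$ be an exchangeable measure over the subsets of $E$, i.e. $\mu(F)=c(|F|)$ for some non-negative numbers $c(0),\dots,c(m)$. Then $\mu$ is cavity-monotone if and only if (1) $c$ is log-concave, i.e. $c(k)^2\ge c(k-1)c(k+1)$ for all $0<k<m$, and (2) the support $\{0\le k\le m: c(k)>0\}$ is an interval containing $0$ and $1$. In particular, for every $b\ge1$ the measure $\mu(F)=\mathbf 1(|F|\le b)$ is cavity-monotone.
   Context: Let $E$ be a finite set. A measure over the subsets of $E$ is a function $\mu:2^E\to[0,\infty)$. For $\mathbf w\in(0,\infty)^E$, $\mathbb P^{\mathbf w}_\mu$ is the law of a random subset $\mathcal F\subseteq E$ with $\mathbb P^{\mathbf w}_\mu(\mathcal F=F)=\mu(F)\prod_{e\in F}w_e/Z(\mathbf w)$, where $Z(\mathbf w)=\sum_{F}\mu(F)\prod_{e\in F}w_e$. $\mu$ is Rayleigh if for all $\mathbf w\in(0,\infty)^E$ and all $e\neq f$ in $E$, $\mathbb P^{\mathbf w}_\mu(e\in\mathcal F,f\in\mathcal F)\le\mathbb P^{\mathbf w}_\mu(e\in\mathcal F)\mathbb P^{\mathbf w}_\mu(f\in\mathcal F)$. $\mu$ is size-increasing if for all $\mathbf w\in(0,\infty)^E$ and all $e\in E$, $\mathbb E^{\mathbf w}_\mu[|\mathcal F|\mathbf 1_{e\in\mathcal F}]>\mathbb E^{\mathbf w}_\mu[|\mathcal F|]\,\mathbb P^{\mathbf w}_\mu(e\in\mathcal F)$. $\mu$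 is cavity-monotone if $\mu(\emptyset)>0$ and $\mu$ is Rayleigh and size-increasing. *)

theory Defs
  imports Complex_Main
begin

text \<open>Measures over subsets of a finite ground set E are functions mu :: 'a set => real
  (only the values on subsets of E matter). Weights w :: 'a => real, required positive on E.\<close>

definition wt :: "('a set \<Rightarrow> real) \<Rightarrow> ('a \<Rightarrow> real) \<Rightarrow> 'a set \<Rightarrow> real" where
  "wt mu w F = mu F * (\<Prod>e\<in>F. w e)"

definition Zfun :: "'a set \<Rightarrow> ('a set \<Rightarrow> real) \<Rightarrow> ('a \<Rightarrow> real) \<Rightarrow> real" where
  "Zfun E mu w = (\<Sum>F\<in>Pow E. wt mu w F)"

definition Ew :: "'a set \<Rightarrow> ('a set \<Rightarrow> real) \<Rightarrow> ('a \<Rightarrow> real) \<Rightarrow> ('a set \<Rightarrow> real) \<Rightarrow> real" where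
  "Ew E mu w g = (\<Sum>F\<in>Pow E. g F * wt mu w F) / Zfun E mu w"

definition Pw :: "'a set \<Rightarrow> ('a set \<Rightarrow> real) \<Rightarrow> ('a \<Rightarrow> real) \<Rightarrow> ('a set \<Rightarrow> bool) \<Rightarrow> real" where
  "Pw E mu w A = (\<Sum>F\<in>{F\<in>Pow E. A F}. wt mu w F) / Zfun E mu w"

definition rayleigh :: "'a set \<Rightarrow> ('a set \<Rightarrow> real) \<Rightarrow> bool" where
  "rayleigh E mu \<longleftrightarrow>
     (\<forall>w. (\<forall>e\<in>E. w e > 0) \<longrightarrow>
        (\<forall>e\<in>E. \<forall>f\<in>E. e \<noteq> f \<longrightarrow>
           Pw E mu w (\<lambda>F. e \<in> F \<and> f \<in> F) \<le> Pw E mu w (\<lambda>F. e \<in> F) * Pw E mu w (\<lambda>F. f \<in> F)))"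

definition size_increasing :: "'a set \<Rightarrow> ('a set \<Rightarrow> real) \<Rightarrow> bool" where
  "size_increasing E mu \<longleftrightarrow>
     (\<forall>w. (\<forall>e\<in>E. w e > 0) \<longrightarrow>
        (\<forall>e\<in>E. Ew E mu w (\<lambda>F. real (card F) * (if e \<in> F then 1 else 0))
                 > Ew E mu w (\<lambda>F. real (card F)) * Pw E mu w (\<lambda>F. e \<in> F)))"

definition cavity_monotone :: "'a set \<Rightarrow> ('a set \<Rightarrow> real) \<Rightarrow> bool" where
  "cavity_monotone E mu \<longleftrightarrow> mu {} > 0 \<and> rayleigh E mu \<and> size_increasing E mu"

end

theory Submission
  imports Defs
begin


definition PP :: "(nat \<Rightarrow> real) \<Rightarrow> ('a \<Rightarrow> real) \<Rightarrow> 'a set \<Rightarrow> nat \<Rightarrow> real" where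
 "PP c w R j = (\<Sum>F\<in>Pow R. c (card F + j) * prod w F)"
definition SS :: "(nat \<Rightarrow> real) \<Rightarrow> ('a \<Rightarrow> real) \<Rightarrow> 'a set \<Rightarrow> nat \<Rightarrow> real" where
 "SS c w R j = (\<Sum>F\<in>Pow R. real (card F) * c (card F + j) * prod w F)"

lemma sum_Pow_insert:
  assumes "finite R" "x \<notin> R"
  shows "(\<Sum>F\<in>Pow (insert x R). h F) = (\<Sum>F\<in>Pow R. h F + h (insert x F))"
proof -
  have inj: "inj_on (insert x) (Pow R)" using assms(2) unfolding inj_on_def
    by (metis Pow_iff insert_ident subset_iff)
  have "(\<Sum>F\<in>Pow (insert x R). h F) = (\<Sum>F\<in>Pow R. h F) + (\<Sum>F\<in>insert x ` Pow R. h F)"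
    unfolding Pow_insert using assms by (intro sum.union_disjoint) auto
  also have "(\<Sum>F\<in>insert x ` Pow R. h F) = (\<Sum>F\<in>Pow R. h (insert x F))"
    using sum.reindex[OF inj] by simp
  finally show ?thesis by (simp add: sum.distrib)
qed

lemma PP_insert:
  assumes "finite R" "x \<notin> R"
  shows "PP c w (insert x R) j = PP c w R j + w x * PP c w R (Suc j)"
proof -
  have "PP c w (insert x R) j = (\<Sum>F\<in>Pow R. c (card F + j) * prod w F + w x * (c (card F + Suc j) * prod w F))"
    unfolding PP_def sum_Pow_insert[OF assms]
  proof (rule sum.cong)
    fix F assume "F \<in> Pow R"
    then have "finite F" "x \<notin> F" using assms finite_subset by auto
    then show "c (card F + j) * prod w F + c (card (insert x F) + j) * prod w (insert x F) =
       c (card F + j) * prod w F + w x * (c (card F + Suc j) * prod w F)" by simp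
  qed simp
  then show ?thesis unfolding PP_def by (simp add: sum.distrib sum_distrib_left)
qed

lemma SS_insert:
  assumes "finite R" "x \<notin> R"
  shows "SS c w (insert x R) j = SS c w R j + w x * (SS c w R (Suc j) + PP c w R (Suc j))"
proof -
  have "SS c w (insert x R) j = (\<Sum>F\<in>Pow R. real (card F) * c (card F + j) * prod w F +
     w x * (real (card F) * c (card F + Suc j) * prod w F + c (card F + Suc j) * prod w F))"
    unfolding SS_def sum_Pow_insert[OF assms]
  proof (rule sum.cong)
    fix F assume "F \<in> Pow R"
    then have "finite F" "x \<notin> F" using assms finite_subset by auto
    then show "real (card F) * c (card F + j) * prod w F + real (card (insert x F)) * c (card (insert x F) + j) * prod w (insert x F) =
       real (card F) * c (card F + j) * prod w F +
     w x * (real (card F) * c (card F + Suc j) * prod w F + c (card F + Suc j) * prod w F)" by (simp add: algebra_simps)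
  qed simp
  then show ?thesis unfolding PP_def SS_def by (simp add: distrib_left sum.distrib sum_distrib_left)
qed

lemma PP_empty[simp]: "PP c w {} j = c j" by (simp add: PP_def)
lemma SS_empty[simp]: "SS c w {} j = 0" by (simp add: SS_def)

lemma G_ident:
  fixes d' :: nat and t qA qB qd qD sA sB sd sD :: real
  shows "real (Suc d') * (qA + t*qB) * (qd + t*qD) + (sd + t*(sD+qD)) * (qA + t*qB) - (sA + t*(sB+qB)) * (qd + t*qD)
   = (real (Suc d') * qA * qd + sd * qA - sA * qd) + t * ((real (Suc (Suc d')) * qA * qD + sD * qA - sA * qD)
     + (real d' * qB * qd + sd * qB - sB * qd)) + t^2 * (real (Suc d') * qB * qD + sD * qB - sB * qD)"
  by (simp add: algebra_simps power2_eq_square)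

lemma G_mono:
  assumes "finite R" "\<forall>r\<in>R. w r > 0" "\<forall>n. c n \<ge> 0"
  shows "\<forall>j d. real d * PP c w R j * PP c w R (j+d) + SS c w R (j+d) * PP c w R j - SS c w R j * PP c w R (j+d)
     \<ge> real d * c j * c (j+d)"
  using assms(1,2)
proof (induction R rule: finite_induct)
  case empty
  then show ?case by simp
next
  case (insert x R)
  let ?G = "\<lambda>j d. real d * PP c w R j * PP c w R (j+d) + SS c w R (j+d) * PP c w R j - SS c w R j * PP c w R (j+d)"
  have IH: "\<And>j d. ?G j d \<ge> real d * c j * c (j+d)" using insert by auto
  have nn: "\<And>j d. ?G j d \<ge> 0" using IH assms(3) by (meson dual_order.trans mult_nonneg_nonneg of_nat_0_le_iff)
  have t: "w x > 0" using insert by auto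
  show ?case
  proof (intro allI)
    fix j d
    show "real d * PP c w (insert x R) j * PP c w (insert x R) (j+d) + SS c w (insert x R) (j+d) * PP c w (insert x R) j - SS c w (insert x R) j * PP c w (insert x R) (j+d)
     \<ge> real d * c j * c (j+d)"
    proof (cases d)
      case 0
      then show ?thesis by simp
    next
      case (Suc d')
      have e: "real d * PP c w (insert x R) j * PP c w (insert x R) (j+d) + SS c w (insert x R) (j+d) * PP c w (insert x R) j - SS c w (insert x R) j * PP c w (insert x R) (j+d)
        = ?G j d + w x * (?G j (Suc d) + ?G (Suc j) d') + (w x)^2 * ?G (Suc j) d"
        using G_ident[where d'=d' and t="w x" and qA="PP c w R j" and qB="PP c w R (Suc j)" and qd="PP c w R (j+d)" and qD="PP c w R (Suc (j+d))"
            and sA="SS c w R j" and sB="SS c w R (Suc j)" and sd="SS c w R (j+d)" and sD="SS c w R (Suc(j+d))"]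
        unfolding PP_insert[OF insert(1,2)] SS_insert[OF insert(1,2)]
        by (simp add: Suc)
      have "w x * (?G j (Suc d) + ?G (Suc j) d') + (w x)^2 * ?G (Suc j) d \<ge> 0"
      proof -
        have a: "0 \<le> ?G j (Suc d) + ?G (Suc j) d'" using nn[where j=j and d="Suc d"] nn[where j="Suc j" and d=d'] by linarith
        have b: "0 \<le> ?G (Suc j) d" using nn[where j="Suc j" and d=d] by linarith
        have "0 \<le> w x * (?G j (Suc d) + ?G (Suc j) d')" using a t by (intro mult_nonneg_nonneg) auto
        moreover have "0 \<le> (w x)^2 * ?G (Suc j) d" using b by (intro mult_nonneg_nonneg) auto
        ultimately show ?thesis by linarith
      qed
      then show ?thesis using e IH[where j=j and d=d] by linarith
    qed
  qed
qed

definition lcseq :: "(nat \<Rightarrow> real) \<Rightarrow> bool" where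
  "lcseq a \<longleftrightarrow> (\<forall>j. a j \<ge> 0) \<and> (\<forall>j. a j * a (j+2) \<le> (a (j+1))^2) \<and>
     (\<forall>i j k. i \<le> j \<and> j \<le> k \<and> a i > 0 \<and> a k > 0 \<longrightarrow> a j > 0)"

lemma lcseq_3:
  assumes "lcseq a" shows "a j * a (j+3) \<le> a (j+1) * a (j+2)"
proof -
  have nn: "\<And>j. a j \<ge> 0" and lc: "\<And>j. a j * a (j+2) \<le> (a (j+1))^2"
    and iz: "\<And>i j k. i \<le> j \<Longrightarrow> j \<le> k \<Longrightarrow> a i > 0 \<Longrightarrow> a k > 0 \<Longrightarrow> a j > 0"
    using assms unfolding lcseq_def by blast+
  show ?thesis
  proof (cases "a j > 0 \<and> a (j+3) > 0")
    case True
    then have p1: "a (j+1) > 0" and p2: "a (j+2) > 0" using iz[of j "j+1" "j+3"] iz[of j "j+2" "j+3"] by auto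
    have l1: "a j * a (j+2) \<le> (a (j+1))^2" using lc[of j] by simp
    have l2: "a (j+1) * a (j+3) \<le> (a (j+2))^2" using lc[of "j+1"] by (simp add: numeral_3_eq_3 add.commute)
    have "(a j * a (j+2)) * (a (j+1) * a (j+3)) \<le> (a (j+1))^2 * (a (j+2))^2"
      using l1 l2 nn by (intro mult_mono) auto
    then have "(a (j+1) * a (j+2)) * (a j * a (j+3)) \<le> (a (j+1) * a (j+2)) * (a (j+1) * a (j+2))"
      by (simp add: power2_eq_square algebra_simps)
    then show ?thesis using p1 p2 by (simp add: mult_le_cancel_left_pos)
  next
    case False
    then have "a j * a (j+3) = 0" using nn[of j] nn[of "j+3"] by auto
    moreover have "0 \<le> a (j+1) * a (j+2)" using nn by simp
    ultimately show ?thesis by linarith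
  qed
qed

lemma lcseq_conv:
  assumes "lcseq a" "t \<ge> 0" shows "lcseq (\<lambda>j. a j + t * a (Suc j))"
proof -
  have nn: "\<And>j. a j \<ge> 0" and lc: "\<And>j. a j * a (j+2) \<le> (a (j+1))^2"
    and iz: "\<And>i j k. i \<le> j \<Longrightarrow> j \<le> k \<Longrightarrow> a i > 0 \<Longrightarrow> a k > 0 \<Longrightarrow> a j > 0"
    using assms unfolding lcseq_def by blast+
  have n1: "\<forall>j. a j + t * a (Suc j) \<ge> 0" using nn assms(2) by (simp add: add_nonneg_nonneg)
  have n2: "(a j + t * a (Suc j)) * (a (j+2) + t * a (Suc (j+2))) \<le> (a (j+1) + t * a (Suc (j+1)))^2" for j
  proof -
    have id: "(a (j+1) + t * a (Suc (j+1)))^2 - (a j + t * a (Suc j)) * (a (j+2) + t * a (Suc (j+2)))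
      = ((a (j+1))^2 - a j * a (j+2)) + t * (a (j+1) * a (j+2) - a j * a (j+3)) + t^2 * ((a (j+2))^2 - a (j+1) * a (j+3))"
      by (simp add: algebra_simps power2_eq_square numeral_3_eq_3)
    have "0 \<le> ((a (j+1))^2 - a j * a (j+2))" using lc[of j] by simp
    moreover have "0 \<le> t * (a (j+1) * a (j+2) - a j * a (j+3))" using lcseq_3[OF assms(1), of j] assms(2) by simp
    moreover have "0 \<le> t^2 * ((a (j+2))^2 - a (j+1) * a (j+3))" using lc[of "j+1"] by (simp add: numeral_3_eq_3 add.commute)
    ultimately show ?thesis using id by linarith
  qed
  have n3: "a j + t * a (Suc j) > 0" if h1: "i \<le> j" and h2: "j \<le> k" and h3: "a i + t * a (Suc i) > 0" and h4: "a k + t * a (Suc k) > 0" for i j k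
  proof (cases "i = j \<or> j = k")
    case True then show ?thesis using h3 h4 by auto
  next
    case False
    then have ij: "i < j" and jk: "j < k" using h1 h2 by auto
    have "\<exists>i'. i' \<le> j \<and> a i' > 0"
    proof (cases "a i > 0")
      case True then show ?thesis using ij by (intro exI[of _ i]) auto
    next
      case False
      then have "a i = 0" using nn[of i] by auto
      then have "t * a (Suc i) > 0" using h3 by simp
      then have "a (Suc i) > 0" using assms(2) nn[of "Suc i"] by (simp add: zero_less_mult_iff)
      then show ?thesis using ij by (intro exI[of _ "Suc i"]) auto
    qed
    then obtain i' where i': "i' \<le> j" "a i' > 0" by blast
    have "\<exists>k'. j \<le> k' \<and> a k' > 0"
    proof (cases "a k > 0")
      case True then show ?thesis using jk by (intro exI[of _ k]) auto
    next
      case False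
      then have "a k = 0" using nn[of k] by auto
      then have "t * a (Suc k) > 0" using h4 by simp
      then have "a (Suc k) > 0" using assms(2) nn[of "Suc k"] by (simp add: zero_less_mult_iff)
      then show ?thesis using jk by (intro exI[of _ "Suc k"]) auto
    qed
    then obtain k' where k': "j \<le> k'" "a k' > 0" by blast
    have "a j > 0" using iz[of i' j k'] i' k' by auto
    then show ?thesis using nn[of "Suc j"] assms(2) by (simp add: add_pos_nonneg)
  qed
  show ?thesis unfolding lcseq_def using n1 n2 n3 by (auto simp del: Suc_eq_plus1)
qed

lemma lcseq_PP:
  assumes "finite R" "\<forall>r\<in>R. w r > 0" "lcseq c"
  shows "lcseq (\<lambda>j. PP c w R j)"
  using assms(1,2)
proof (induction R rule: finite_induct)
  case empty
  then show ?case using assms(3) by simp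
next
  case (insert x R)
  have "lcseq (\<lambda>j. PP c w R j + w x * PP c w R (Suc j))"
    using insert by (intro lcseq_conv) (auto simp: less_imp_le)
  then show ?case by (simp add: PP_insert[OF insert(1,2)])
qed

lemma sum_Pow_insert2:
  assumes "finite R" "e \<notin> R" "f \<notin> R" "e \<noteq> f"
  shows "(\<Sum>F\<in>Pow (insert e (insert f R)). h F) =
    (\<Sum>F\<in>Pow R. h F + h (insert f F) + (h (insert e F) + h (insert e (insert f F))))"
proof -
  have "(\<Sum>F\<in>Pow (insert e (insert f R)). h F) = (\<Sum>F\<in>Pow (insert f R). h F + h (insert e F))"
    using assms by (intro sum_Pow_insert) auto
  also have "\<dots> = (\<Sum>F\<in>Pow R. h F + h (insert e F) + (h (insert f F) + h (insert e (insert f F))))"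
    using assms by (intro sum_Pow_insert) auto
  finally show ?thesis by (simp add: algebra_simps)
qed

lemma sums_ef:
  assumes fin: "finite E" and ef: "e \<in> E" "f \<in> E" "e \<noteq> f"
    and mu: "\<forall>F\<subseteq>E. mu F = cc (card F)"
  defines "R \<equiv> E - {e, f}"
  shows "Zfun E mu w = PP cc w R 0 + w f * PP cc w R 1 + (w e * PP cc w R 1 + w e * w f * PP cc w R 2)"
    and "Pw E mu w (\<lambda>F. e \<in> F \<and> f \<in> F) = (w e * w f * PP cc w R 2) / Zfun E mu w"
    and "Pw E mu w (\<lambda>F. e \<in> F) = (w e * PP cc w R 1 + w e * w f * PP cc w R 2) / Zfun E mu w"
    and "Pw E mu w (\<lambda>F. f \<in> F) = (w f * PP cc w R 1 + w e * w f * PP cc w R 2) / Zfun E mu w"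
proof -
  have finR: "finite R" using fin R_def by auto
  have Eeq: "E = insert e (insert f R)" using ef R_def by auto
  have nR: "e \<notin> R" "f \<notin> R" using R_def by auto
  note split = sum_Pow_insert2[OF finR nR ef(3)]
  have w0: "wt mu w F = cc (card F) * prod w F"
   and w1: "wt mu w (insert f F) = w f * (cc (Suc (card F)) * prod w F)"
   and w2: "wt mu w (insert e F) = w e * (cc (Suc (card F)) * prod w F)"
   and w3: "wt mu w (insert e (insert f F)) = w e * w f * (cc (Suc (Suc (card F))) * prod w F)"
   and nF: "e \<notin> F" "f \<notin> F"
    if "F \<subseteq> R" for F
  proof -
    have F: "F \<subseteq> R" "finite F" using that finR finite_subset by auto
    then have sub: "F \<subseteq> E" "insert f F \<subseteq> E" "insert e F \<subseteq> E" "insert e (insert f F) \<subseteq> E"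
      using Eeq by auto
    show eF: "e \<notin> F" "f \<notin> F" using F nR by auto
    show "wt mu w F = cc (card F) * prod w F" using mu sub unfolding wt_def by simp
    show "wt mu w (insert f F) = w f * (cc (Suc (card F)) * prod w F)" using mu sub F eF unfolding wt_def
      by (auto simp: algebra_simps)
    show "wt mu w (insert e F) = w e * (cc (Suc (card F)) * prod w F)" using mu sub F eF unfolding wt_def
      by (auto simp: algebra_simps)
    show "wt mu w (insert e (insert f F)) = w e * w f * (cc (Suc (Suc (card F))) * prod w F)"
      using mu sub F eF ef(3) unfolding wt_def by (auto simp: algebra_simps)
  qed
  have s0: "(\<Sum>F\<in>Pow R. wt mu w F) = PP cc w R 0" unfolding PP_def
    by (rule sum.cong) (auto simp: w0)
  have s1: "(\<Sum>F\<in>Pow R. wt mu w (insert f F)) = w f * PP cc w R 1" unfolding PP_def sum_distrib_left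
    by (rule sum.cong) (auto simp: w1)
  have s2: "(\<Sum>F\<in>Pow R. wt mu w (insert e F)) = w e * PP cc w R 1" unfolding PP_def sum_distrib_left
    by (rule sum.cong) (auto simp: w2)
  have s3: "(\<Sum>F\<in>Pow R. wt mu w (insert e (insert f F))) = w e * w f * PP cc w R 2" unfolding PP_def sum_distrib_left
    by (rule sum.cong) (auto simp: w3 numeral_2_eq_2)
  have Zs: "(\<Sum>F\<in>Pow E. wt mu w F) = PP cc w R 0 + w f * PP cc w R 1 + (w e * PP cc w R 1 + w e * w f * PP cc w R 2)"
    unfolding Eeq split sum.distrib s0 s1 s2 s3 ..
  then show "Zfun E mu w = PP cc w R 0 + w f * PP cc w R 1 + (w e * PP cc w R 1 + w e * w f * PP cc w R 2)"
    unfolding Zfun_def .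
  have nP: "e \<notin> F" "f \<notin> F" if "F \<in> Pow R" for F using that nF by auto
  have Zne: "Zfun E mu w \<noteq> 0 \<Longrightarrow> (a / Zfun E mu w) * Zfun E mu w = a" for a by simp
  show "Pw E mu w (\<lambda>F. e \<in> F \<and> f \<in> F) = (w e * w f * PP cc w R 2) / Zfun E mu w"
  proof -
    have "(\<Sum>F\<in>{F\<in>Pow E. e \<in> F \<and> f \<in> F}. wt mu w F) = w e * w f * PP cc w R 2"
      unfolding sum.inter_filter[OF finite_Pow_iff[THEN iffD2, OF fin]]
      unfolding Eeq split
      apply (subst sum.cong[OF refl, where h="(\<lambda>F. wt mu w (insert e (insert f F)))"])
      using nP ef(3) apply (auto simp: sum.distrib s1 s2 s3)
      done
    then show ?thesis unfolding Pw_def by simp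
  qed
  show "Pw E mu w (\<lambda>F. e \<in> F) = (w e * PP cc w R 1 + w e * w f * PP cc w R 2) / Zfun E mu w"
  proof -
    have "(\<Sum>F\<in>{F\<in>Pow E. e \<in> F}. wt mu w F) = w e * PP cc w R 1 + w e * w f * PP cc w R 2"
      unfolding sum.inter_filter[OF finite_Pow_iff[THEN iffD2, OF fin]]
      unfolding Eeq split
      apply (subst sum.cong[OF refl, where h="(\<lambda>F. wt mu w (insert e F) + wt mu w (insert e (insert f F)))"])
      using nP ef(3) apply (auto simp: sum.distrib s1 s2 s3)
      done
    then show ?thesis unfolding Pw_def by simp
  qed
  show "Pw E mu w (\<lambda>F. f \<in> F) = (w f * PP cc w R 1 + w e * w f * PP cc w R 2) / Zfun E mu w"
  proof -
    have "(\<Sum>F\<in>{F\<in>Pow E. f \<in> F}. wt mu w F) = w f * PP cc w R 1 + w e * w f * PP cc w R 2"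
      unfolding sum.inter_filter[OF finite_Pow_iff[THEN iffD2, OF fin]]
      unfolding Eeq split
      apply (subst sum.cong[OF refl, where h="(\<lambda>F. wt mu w (insert f F) + wt mu w (insert e (insert f F)))"])
      using nP ef(3) apply (auto simp: sum.distrib s1 s2 s3)
      done
    then show ?thesis unfolding Pw_def by simp
  qed
qed

lemma ray_alg:
  fixes x y Z a0 a1 a2 :: real
  assumes "x > 0" "y > 0" "Z > 0" "Z = a0 + y*a1 + (x*a1 + x*y*a2)"
  shows "(x*y*a2)/Z \<le> ((x*a1 + x*y*a2)/Z) * ((y*a1 + x*y*a2)/Z) \<longleftrightarrow> a0*a2 \<le> a1^2"
proof -
  have "((x*a1 + x*y*a2)/Z) * ((y*a1 + x*y*a2)/Z) = ((x*a1 + x*y*a2)*(y*a1 + x*y*a2)/Z)/Z" by simp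
  moreover have "(x*y*a2)/Z \<le> (M/Z)/Z \<longleftrightarrow> (x*y*a2)*Z \<le> M" for M
    using assms(3) by (simp add: divide_le_eq le_divide_eq mult.commute)
  moreover have "(x*a1 + x*y*a2)*(y*a1 + x*y*a2) - (x*y*a2)*Z = (x*y)*(a1^2 - a0*a2)"
    using assms(4) by (simp add: algebra_simps power2_eq_square)
  moreover have "x*y > 0" using assms by simp
  ultimately have "(x*y*a2)/Z \<le> ((x*a1 + x*y*a2)/Z) * ((y*a1 + x*y*a2)/Z) \<longleftrightarrow> 0 \<le> (x*y)*(a1^2 - a0*a2)"
    by (metis diff_ge_0_iff_ge)
  also have "\<dots> \<longleftrightarrow> 0 \<le> a1^2 - a0*a2" using mult_le_cancel_left_pos[OF \<open>x*y > 0\<close>, of 0] by simp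
  finally show ?thesis by simp
qed

lemma ray_equiv:
  assumes fin: "finite E" and ef: "e \<in> E" "f \<in> E" "e \<noteq> f"
    and mu: "\<forall>F\<subseteq>E. mu F = cc (card F)"
    and pos: "w e > 0" "w f > 0" "Zfun E mu w > 0"
  shows "Pw E mu w (\<lambda>F. e \<in> F \<and> f \<in> F) \<le> Pw E mu w (\<lambda>F. e \<in> F) * Pw E mu w (\<lambda>F. f \<in> F)
     \<longleftrightarrow> PP cc w (E - {e,f}) 0 * PP cc w (E - {e,f}) 2 \<le> (PP cc w (E - {e,f}) 1)^2"
  unfolding sums_ef[OF fin ef mu]
  by (rule ray_alg[OF pos(1,2) pos(3)[unfolded sums_ef(1)[OF fin ef mu]]]) simp

lemma sums_e:
  assumes fin: "finite E" and e: "e \<in> E"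
    and mu: "\<forall>F\<subseteq>E. mu F = cc (card F)"
  defines "R \<equiv> E - {e}"
  shows "Zfun E mu w = PP cc w R 0 + w e * PP cc w R 1"
    and "Pw E mu w (\<lambda>F. e \<in> F) = (w e * PP cc w R 1) / Zfun E mu w"
    and "Ew E mu w (\<lambda>F. real (card F) * (if e \<in> F then 1 else 0)) = (w e * (SS cc w R 1 + PP cc w R 1)) / Zfun E mu w"
    and "Ew E mu w (\<lambda>F. real (card F)) = (SS cc w R 0 + w e * (SS cc w R 1 + PP cc w R 1)) / Zfun E mu w"
proof -
  have finR: "finite R" using fin R_def by auto
  have Eeq: "E = insert e R" using e R_def by auto
  have nR: "e \<notin> R" using R_def by auto
  note split = sum_Pow_insert[OF finR nR]
  have w0: "wt mu w F = cc (card F) * prod w F"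
   and w2: "wt mu w (insert e F) = w e * (cc (Suc (card F)) * prod w F)"
   and c2: "card (insert e F) = Suc (card F)"
   and nF: "e \<notin> F"
    if "F \<in> Pow R" for F
  proof -
    have F: "F \<subseteq> R" "finite F" using that finR finite_subset by auto
    then have sub: "F \<subseteq> E" "insert e F \<subseteq> E"
      using Eeq by auto
    show eF: "e \<notin> F" using F nR by auto
    show "wt mu w F = cc (card F) * prod w F" using mu sub unfolding wt_def by simp
    show "wt mu w (insert e F) = w e * (cc (Suc (card F)) * prod w F)" using mu sub F eF unfolding wt_def
      by (auto simp: algebra_simps)
    show "card (insert e F) = Suc (card F)" using F eF by simp
  qed
  show "Zfun E mu w = PP cc w R 0 + w e * PP cc w R 1"
    unfolding Zfun_def Eeq split sum.distrib PP_def sum_distrib_left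
    by (intro arg_cong2[where f="(+)"] sum.cong) (auto simp: w0 w2)
  have "(\<Sum>F\<in>{F\<in>Pow E. e \<in> F}. wt mu w F) = w e * PP cc w R 1"
    unfolding sum.inter_filter[OF finite_Pow_iff[THEN iffD2, OF fin]]
    unfolding Eeq split PP_def sum_distrib_left
    by (rule sum.cong) (auto simp: w0 w2 nF)
  then show "Pw E mu w (\<lambda>F. e \<in> F) = (w e * PP cc w R 1) / Zfun E mu w"
    unfolding Pw_def by simp
  have "(\<Sum>F\<in>Pow E. real (card F) * (if e \<in> F then 1 else 0) * wt mu w F) = w e * (SS cc w R 1 + PP cc w R 1)"
    unfolding Eeq split PP_def SS_def sum_distrib_left sum.distrib[symmetric] 
    by (rule sum.cong) (auto simp: w0 w2 nF c2 algebra_simps)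
  then show "Ew E mu w (\<lambda>F. real (card F) * (if e \<in> F then 1 else 0)) = (w e * (SS cc w R 1 + PP cc w R 1)) / Zfun E mu w"
    unfolding Ew_def by simp
  have "(\<Sum>F\<in>Pow E. real (card F) * wt mu w F) = SS cc w R 0 + w e * (SS cc w R 1 + PP cc w R 1)"
    unfolding Eeq split PP_def SS_def sum_distrib_left sum.distrib[symmetric] 
    by (rule sum.cong) (auto simp: w0 w2 nF c2 algebra_simps)
  then show "Ew E mu w (\<lambda>F. real (card F)) = (SS cc w R 0 + w e * (SS cc w R 1 + PP cc w R 1)) / Zfun E mu w"
    unfolding Ew_def by simp
qed

lemma size_alg:
  fixes x Z q0 q1 s0 s1 :: real
  assumes "x > 0" "Z > 0" "Z = q0 + x * q1"
  shows "(x * (s1 + q1)) / Z > ((s0 + x * (s1 + q1)) / Z) * ((x * q1) / Z) \<longleftrightarrow> q0*q1 + s1*q0 - s0*q1 > 0"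
proof -
  have "((s0 + x * (s1 + q1)) / Z) * ((x * q1) / Z) = ((s0 + x * (s1 + q1)) * (x * q1) / Z) / Z" by simp
  moreover have "(M/Z)/Z < (x * (s1 + q1)) / Z \<longleftrightarrow> M < (x * (s1 + q1))*Z" for M
    using assms(2) by (simp add: divide_less_eq less_divide_eq mult.commute)
  moreover have "(x * (s1 + q1))*Z - (s0 + x * (s1 + q1)) * (x * q1) = x * (q0*q1 + s1*q0 - s0*q1)"
    using assms(3) by (simp add: algebra_simps)
  ultimately have "(x * (s1 + q1)) / Z > ((s0 + x * (s1 + q1)) / Z) * ((x * q1) / Z) \<longleftrightarrow> 0 < x * (q0*q1 + s1*q0 - s0*q1)"
    by (metis diff_gt_0_iff_gt)
  also have "\<dots> \<longleftrightarrow> 0 < q0*q1 + s1*q0 - s0*q1" using mult_less_cancel_left_pos[OF assms(1), of 0] by simp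
  finally show ?thesis by simp
qed

lemma size_equiv:
  assumes fin: "finite E" and e: "e \<in> E"
    and mu: "\<forall>F\<subseteq>E. mu F = cc (card F)"
    and pos: "w e > 0" "Zfun E mu w > 0"
  shows "Ew E mu w (\<lambda>F. real (card F) * (if e \<in> F then 1 else 0)) > Ew E mu w (\<lambda>F. real (card F)) * Pw E mu w (\<lambda>F. e \<in> F)
    \<longleftrightarrow> PP cc w (E-{e}) 0 * PP cc w (E-{e}) 1 + SS cc w (E-{e}) 1 * PP cc w (E-{e}) 0 - SS cc w (E-{e}) 0 * PP cc w (E-{e}) 1 > 0"
  unfolding sums_e(2-4)[OF fin e mu]
  by (rule size_alg[OF pos(1) pos(2) sums_e(1)[OF fin e mu]])

lemma Z_pos:
  assumes fin: "finite E" and pos: "\<forall>r\<in>E. w r > 0" and mu: "\<forall>F\<subseteq>E. mu F = cc (card F)"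
    and nn: "\<forall>n. cc n \<ge> 0" and c0: "cc 0 > 0"
  shows "Zfun E mu w > 0"
proof -
  have "wt mu w {} \<le> Zfun E mu w" unfolding Zfun_def
  proof (rule member_le_sum)
    fix F assume "F \<in> Pow E - {{}}"
    then have "F \<subseteq> E" by auto
    moreover then have "prod w F \<ge> 0" using pos by (intro prod_nonneg) (auto simp: less_imp_le)
    ultimately show "0 \<le> wt mu w F" unfolding wt_def using mu nn by simp
  qed (use fin in auto)
  moreover have "wt mu w {} = cc 0" unfolding wt_def using mu by simp
  ultimately show ?thesis using c0 by simp
qed



lemma forward:
  fixes E :: "'a set" and mu :: "'a set \<Rightarrow> real" and c :: "nat \<Rightarrow> real" and m :: nat
  assumes fin: "finite E" and m: "m = card E" "m \<ge> 1"
    and cnn: "\<And>k. k \<le> m \<Longrightarrow> c k \<ge> 0"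
    and mu0: "\<And>F. F \<subseteq> E \<Longrightarrow> mu F = c (card F)"
    and lc: "\<forall>k. 0 < k \<and> k < m \<longrightarrow> (c k)\<^sup>2 \<ge> c (k - 1) * c (k + 1)"
    and c0: "c 0 > 0" and c1: "c 1 > 0"
    and iv: "\<forall>i j k. i \<le> m \<and> c i > 0 \<and> k \<le> m \<and> c k > 0 \<and> i \<le> j \<and> j \<le> k \<longrightarrow> c j > 0"
  shows "cavity_monotone E mu"
proof -
  define cc where "cc k = (if k \<le> m then c k else 0)" for k
  have mu: "\<forall>F\<subseteq>E. mu F = cc (card F)"
    using mu0 card_mono[OF fin] m(1) unfolding cc_def by auto
  have nn: "\<forall>n. cc n \<ge> 0" using cnn unfolding cc_def by auto
  have cc0: "cc 0 > 0" and cc1: "cc 1 > 0" using c0 c1 m(2) unfolding cc_def by auto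
  have lcs: "lcseq cc" unfolding lcseq_def
  proof (intro conjI allI impI)
    fix j show "cc j \<ge> 0" using nn by auto
  next
    fix j show "cc j * cc (j+2) \<le> (cc (j+1))^2"
    proof (cases "j + 2 \<le> m")
      case True
      then have "c (j+1 - 1) * c (j+1+1) \<le> (c (j+1))^2" using lc[rule_format, of "j+1"] by auto
      then show ?thesis using True unfolding cc_def by (simp add: numeral_2_eq_2)
    next
      case False
      then show ?thesis unfolding cc_def by simp
    qed
  next
    fix i j k assume h: "i \<le> j \<and> j \<le> k \<and> 0 < cc i \<and> 0 < cc k"
    then have "k \<le> m" "i \<le> m" unfolding cc_def by (auto split: if_splits)
    moreover have "c i > 0" "c k > 0" using h \<open>k \<le> m\<close> \<open>i \<le> m\<close> unfolding cc_def by auto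
    ultimately have pre: "i \<le> m \<and> 0 < c i \<and> k \<le> m \<and> 0 < c k \<and> i \<le> j \<and> j \<le> k" using h \<open>k \<le> m\<close> \<open>i \<le> m\<close> by auto
    then have "c j > 0" using iv by blast
    moreover have "j \<le> m" using pre by auto
    ultimately show "0 < cc j" unfolding cc_def by simp
  qed
  have ray: "rayleigh E mu" unfolding rayleigh_def
  proof (intro allI impI ballI)
    fix w :: "'a \<Rightarrow> real" and e f assume pos: "\<forall>e\<in>E. 0 < w e" and ef: "e \<in> E" "f \<in> E" "e \<noteq> f"
    have Z: "Zfun E mu w > 0" by (rule Z_pos[OF fin pos mu nn cc0])
    have "lcseq (\<lambda>j. PP cc w (E - {e,f}) j)" using fin pos by (intro lcseq_PP lcs) auto
    then have "PP cc w (E - {e,f}) 0 * PP cc w (E - {e,f}) (0+2) \<le> (PP cc w (E - {e,f}) (0+1))^2"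
      unfolding lcseq_def by blast
    then have "PP cc w (E - {e,f}) 0 * PP cc w (E - {e,f}) 2 \<le> (PP cc w (E - {e,f}) 1)^2" by (simp add: numeral_2_eq_2)
    then show "Pw E mu w (\<lambda>F. e \<in> F \<and> f \<in> F) \<le> Pw E mu w (\<lambda>F. e \<in> F) * Pw E mu w (\<lambda>F. f \<in> F)"
      using ray_equiv[OF fin ef mu] pos ef Z by auto
  qed
  have si: "size_increasing E mu" unfolding size_increasing_def
  proof (intro allI impI ballI)
    fix w :: "'a \<Rightarrow> real" and e assume pos: "\<forall>e\<in>E. 0 < w e" and e: "e \<in> E"
    have Z: "Zfun E mu w > 0" by (rule Z_pos[OF fin pos mu nn cc0])
    have "\<forall>j d. real d * PP cc w (E-{e}) j * PP cc w (E-{e}) (j+d) + SS cc w (E-{e}) (j+d) * PP cc w (E-{e}) j - SS cc w (E-{e}) j * PP cc w (E-{e}) (j+d)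
     \<ge> real d * cc j * cc (j+d)" using fin pos nn by (intro G_mono) auto
    then have "PP cc w (E-{e}) 0 * PP cc w (E-{e}) 1 + SS cc w (E-{e}) 1 * PP cc w (E-{e}) 0 - SS cc w (E-{e}) 0 * PP cc w (E-{e}) 1
      \<ge> cc 0 * cc 1" by (drule_tac x=0 in spec, drule_tac x=1 in spec) simp
    moreover have "cc 0 * cc 1 > 0" using cc0 cc1 by simp
    ultimately show "Ew E mu w (\<lambda>F. real (card F) * (if e \<in> F then 1 else 0)) > Ew E mu w (\<lambda>F. real (card F)) * Pw E mu w (\<lambda>F. e \<in> F)"
      using size_equiv[OF fin e mu] pos e Z by auto
  qed
  show ?thesis unfolding cavity_monotone_def using ray si mu0[of "{}"] c0 by simp
qed



definition TT :: "(nat \<Rightarrow> real) \<Rightarrow> 'a set \<Rightarrow> 'a set \<Rightarrow> nat \<Rightarrow> nat \<Rightarrow> nat \<Rightarrow> real \<Rightarrow> real" where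
 "TT c R R1 A i s x = (\<Sum>F\<in>Pow R. c (card F + i) * x ^ (A * card (R1 - F) + card (F - R1) - s))"

lemma pow_aux:
  fixes x :: real assumes "x > 0"
  shows "x ^ (A * (a + b)) * ((1 / x ^ A) ^ a * x ^ d) = x ^ (A * b + d)"
proof -
  have "x ^ (A * (a + b)) = (x^A)^a * (x^A)^b" by (simp add: power_add power_mult add_mult_distrib2)
  moreover have "(x^A)^a * (1 / x ^ A) ^ a = 1" using assms by (simp add: power_one_over)
  ultimately have "x ^ (A * (a + b)) * ((1 / x ^ A) ^ a * x ^ d) = (x^A)^b * x^d"
    by (metis (no_types, lifting) mult.assoc mult.commute mult_1)
  then show ?thesis by (simp add: power_add power_mult)
qed

lemma PP_eps:
  assumes "finite R" "R1 \<subseteq> R" "x > 0"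
  shows "x ^ (A * card R1) * PP c (\<lambda>r. if r \<in> R1 then 1 / x ^ A else x) R i = TT c R R1 A i 0 x"
  unfolding PP_def TT_def sum_distrib_left
proof (rule sum.cong)
  fix F assume "F \<in> Pow R"
  then have F: "F \<subseteq> R" "finite F" using assms finite_subset by auto
  have fR1: "finite R1" using assms finite_subset by auto
  have "prod (\<lambda>r. if r \<in> R1 then 1 / x ^ A else x) F
     = prod (\<lambda>r. if r \<in> R1 then 1 / x ^ A else x) (F \<inter> R1) * prod (\<lambda>r. if r \<in> R1 then 1 / x ^ A else x) (F - R1)"
    using F(2) by (rule prod.Int_Diff)
  also have "\<dots> = (1 / x ^ A) ^ card (F \<inter> R1) * x ^ card (F - R1)"
  proof -
    have "prod (\<lambda>r. if r \<in> R1 then 1 / x ^ A else x) (F \<inter> R1) = prod (\<lambda>_. 1 / x ^ A) (F \<inter> R1)"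
      by (rule prod.cong) auto
    moreover have "prod (\<lambda>r. if r \<in> R1 then 1 / x ^ A else x) (F - R1) = prod (\<lambda>_. x) (F - R1)"
      by (rule prod.cong) auto
    ultimately show ?thesis by simp
  qed
  finally have p: "prod (\<lambda>r. if r \<in> R1 then 1 / x ^ A else x) F = (1 / x ^ A) ^ card (F \<inter> R1) * x ^ card (F - R1)" .
  have cR: "card R1 = card (F \<inter> R1) + card (R1 - F)" using card_Int_Diff[OF fR1, of F] by (simp add: Int_commute)
  show "x ^ (A * card R1) * (c (card F + i) * prod (\<lambda>r. if r \<in> R1 then 1 / x ^ A else x) F) =
        c (card F + i) * x ^ (A * card (R1 - F) + card (F - R1) - 0)"
  proof -
    have h: "x ^ (A * card R1) * prod (\<lambda>r. if r \<in> R1 then 1 / x ^ A else x) F = x ^ (A * card (R1 - F) + card (F - R1))"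
      unfolding p cR by (rule pow_aux[OF assms(3)])
    show ?thesis by (simp only: mult.left_commute[of "x ^ (A*card R1)"] h diff_zero)
  qed
qed simp

lemma TT_shift:
  assumes "\<forall>F\<in>Pow R. c (card F + i) \<noteq> 0 \<longrightarrow> s \<le> A * card (R1 - F) + card (F - R1)"
  shows "TT c R R1 A i 0 x = x ^ s * TT c R R1 A i s x"
  unfolding TT_def sum_distrib_left
proof (rule sum.cong)
  fix F assume F: "F \<in> Pow R"
  show "c (card F + i) * x ^ (A * card (R1 - F) + card (F - R1) - 0) =
         x ^ s * (c (card F + i) * x ^ (A * card (R1 - F) + card (F - R1) - s))"
  proof (cases "c (card F + i) = 0")
    case False
    then have "s \<le> A * card (R1 - F) + card (F - R1)" using assms F by auto
    then have "x ^ (A * card (R1 - F) + card (F - R1)) = x^s * x ^ (A * card (R1 - F) + card (F - R1) - s)"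
      by (metis le_add_diff_inverse power_add)
    then show ?thesis by simp
  qed simp
qed simp

lemma TT_cont: "continuous_on UNIV (TT c R R1 A i s)"
  unfolding TT_def[abs_def] by (intro continuous_intros)

lemma TT_zero:
  assumes "finite R" "R1 \<subseteq> R" "A \<ge> 1"
  shows "TT c R R1 A i 0 0 = c (card R1 + i)"
proof -
  have fR1: "finite R1" using assms finite_subset by auto
  have "TT c R R1 A i 0 0 = (\<Sum>F\<in>Pow R. if F = R1 then c (card R1 + i) else 0)"
    unfolding TT_def
  proof (rule sum.cong)
    fix F assume "F \<in> Pow R"
    then have F: "F \<subseteq> R" "finite F" using assms finite_subset by auto
    have "(A * card (R1 - F) + card (F - R1) = 0) \<longleftrightarrow> F = R1"
      using assms(3) F fR1 by (auto simp: card_eq_0_iff)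
    then show "c (card F + i) * 0 ^ (A * card (R1 - F) + card (F - R1) - 0) = (if F = R1 then c (card R1 + i) else 0)"
      by (auto simp: power_0_left)
  qed simp
  also have "\<dots> = c (card R1 + i)" using assms by simp
  finally show ?thesis .
qed

lemma lim0:
  fixes g :: "real \<Rightarrow> real"
  assumes "continuous_on UNIV g" "\<forall>x>0. g x \<ge> 0"
  shows "g 0 \<ge> 0"
proof -
  have "isCont g 0" using assms(1) continuous_on_eq_continuous_at by blast
  then have "(g \<longlongrightarrow> g 0) (at 0)" by (simp add: isCont_def)
  then have "(g \<longlongrightarrow> g 0) (at_right 0)" by (rule tendsto_mono[rotated]) (simp add: at_le)
  moreover have "\<forall>\<^sub>F x in at_right 0. 0 \<le> g x"
    using eventually_at_right_less[of "0::real"] assms(2) by (auto elim: eventually_mono)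
  ultimately show ?thesis by (rule tendsto_lowerbound) simp
qed



lemma ray_R:
  assumes ray: "rayleigh E mu" and fin: "finite E" and ef: "e \<in> E" "f \<in> E" "e \<noteq> f"
    and mu: "\<forall>F\<subseteq>E. mu F = cc (card F)" and nn: "\<forall>n. cc n \<ge> 0" and c0: "cc 0 > 0"
    and pos: "\<forall>r\<in>E - {e,f}. w r > 0"
  shows "PP cc w (E - {e,f}) 0 * PP cc w (E - {e,f}) 2 \<le> (PP cc w (E - {e,f}) 1)^2"
proof -
  define w' where "w' r = (if r \<in> E - {e,f} then w r else 1)" for r
  have pos': "\<forall>r\<in>E. w' r > 0" using pos unfolding w'_def by auto
  have eq: "PP cc w' (E - {e,f}) j = PP cc w (E - {e,f}) j" for j
    unfolding PP_def
  proof (rule sum.cong)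
    fix F assume "F \<in> Pow (E - {e,f})"
    then have "prod w' F = prod w F" unfolding w'_def by (intro prod.cong) auto
    then show "cc (card F + j) * prod w' F = cc (card F + j) * prod w F" by simp
  qed simp
  have Z: "Zfun E mu w' > 0" by (rule Z_pos[OF fin pos' mu nn c0])
  have "Pw E mu w' (\<lambda>F. e \<in> F \<and> f \<in> F) \<le> Pw E mu w' (\<lambda>F. e \<in> F) * Pw E mu w' (\<lambda>F. f \<in> F)"
    using ray pos' ef unfolding rayleigh_def by blast
  then have "PP cc w' (E - {e,f}) 0 * PP cc w' (E - {e,f}) 2 \<le> (PP cc w' (E - {e,f}) 1)^2"
    using ray_equiv[OF fin ef mu, of w'] pos' ef Z by auto
  then show ?thesis unfolding eq .
qed

lemma lc_from_ray:
  assumes fin: "finite R" and H: "\<forall>w. (\<forall>r\<in>R. w r > 0) \<longrightarrow> PP c w R 0 * PP c w R 2 \<le> (PP c w R 1)^2"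
    and n: "n \<le> card R"
  shows "c n * c (n+2) \<le> (c (n+1))^2"
proof -
  obtain R1 where R1: "R1 \<subseteq> R" "card R1 = n" "finite R1" using obtain_subset_with_card_n[OF n] by blast
  define g where "g x = (TT c R R1 1 1 0 x)^2 - TT c R R1 1 0 0 x * TT c R R1 1 2 0 x" for x
  have "g x \<ge> 0" if x: "x > 0" for x
  proof -
    define w where "w r = (if r \<in> R1 then 1 / x ^ 1 else x)" for r
    have "\<forall>r\<in>R. w r > 0" using x unfolding w_def by auto
    then have h: "PP c w R 0 * PP c w R 2 \<le> (PP c w R 1)^2" using H by blast
    have e: "x ^ (1 * card R1) * PP c w R i = TT c R R1 1 i 0 x" for i
      unfolding w_def by (rule PP_eps[OF fin R1(1) x])
    have "(x ^ (1 * card R1) * PP c w R 0) * (x ^ (1 * card R1) * PP c w R 2) \<le> (x ^ (1 * card R1) * PP c w R 1)^2"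
    proof -
      have "(x ^ (1 * card R1))^2 * (PP c w R 0 * PP c w R 2) \<le> (x ^ (1 * card R1))^2 * (PP c w R 1)^2"
        using h by (intro mult_left_mono) auto
      then show ?thesis by (simp add: power2_eq_square algebra_simps)
    qed
    then show ?thesis unfolding e g_def by simp
  qed
  moreover have "continuous_on UNIV g" unfolding g_def[abs_def] using TT_cont
    by (intro continuous_intros) auto
  ultimately have "g 0 \<ge> 0" using lim0 by blast
  then show ?thesis unfolding g_def using TT_zero[OF fin R1(1)] R1(2) by (simp add: add.commute)
qed

lemma gap_from_ray:
  assumes fin: "finite R" and H: "\<forall>w. (\<forall>r\<in>R. w r > 0) \<longrightarrow> PP c w R 0 * PP c w R 2 \<le> (PP c w R 1)^2"
    and ns: "n + s \<le> card R" and nn: "\<forall>t. c t \<ge> 0" and cn: "c n > 0" and ck: "c (n+s+2) > 0"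
    and z: "\<forall>t. n < t \<and> t < n+s+2 \<longrightarrow> c t = 0"
  shows False
proof -
  have "n \<le> card R" using ns by simp
  obtain R1 where R1: "R1 \<subseteq> R" "card R1 = n" "finite R1" using obtain_subset_with_card_n[OF \<open>n \<le> card R\<close>] by blast
  have "s \<le> card (R - R1)" using ns R1 fin by (simp add: card_Diff_subset)
  then obtain G0 where G0: "G0 \<subseteq> R - R1" "card G0 = s" "finite G0" using obtain_subset_with_card_n by blast
  define A where "A = Suc s"
  have cF: "card F = n + card (F - R1)" if "R1 \<subseteq> F" "F \<subseteq> R" for F
  proof -
    have "finite F" using that fin finite_subset by auto
    then have "card R1 \<le> card F" using that(1) card_mono by blast
    then show ?thesis using that R1 \<open>finite F\<close> by (simp add: card_Diff_subset)
  qed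
  have sh2: "\<forall>F\<in>Pow R. c (card F + 2) \<noteq> 0 \<longrightarrow> s \<le> A * card (R1 - F) + card (F - R1)"
  proof (intro ballI impI)
    fix F assume F: "F \<in> Pow R" and nz: "c (card F + 2) \<noteq> 0"
    show "s \<le> A * card (R1 - F) + card (F - R1)"
    proof (cases "R1 \<subseteq> F")
      case True
      then have "card F = n + card (F - R1)" using cF F by auto
      then have "\<not> card (F - R1) < s"
        using z[rule_format, of "card F + 2"] nz by auto
      moreover have "R1 - F = {}" using True by auto
      ultimately show ?thesis by simp
    next
      case False
      then have "R1 - F \<noteq> {}" by auto
      then have "card (R1 - F) \<ge> 1" using R1(3) by (simp add: Suc_leI card_gt_0_iff)
      then have "A * card (R1 - F) \<ge> A" by simp
      then show ?thesis unfolding A_def by linarith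
    qed
  qed
  have sh1: "\<forall>F\<in>Pow R. c (card F + 1) \<noteq> 0 \<longrightarrow> Suc s \<le> A * card (R1 - F) + card (F - R1)"
  proof (intro ballI impI)
    fix F assume F: "F \<in> Pow R" and nz: "c (card F + 1) \<noteq> 0"
    show "Suc s \<le> A * card (R1 - F) + card (F - R1)"
    proof (cases "R1 \<subseteq> F")
      case True
      then have "card F = n + card (F - R1)" using cF F by auto
      then have "\<not> card (F - R1) < Suc s"
        using z[rule_format, of "card F + 1"] nz by auto
      moreover have "R1 - F = {}" using True by auto
      ultimately show ?thesis by simp
    next
      case False
      then have "R1 - F \<noteq> {}" by auto
      then have "card (R1 - F) \<ge> 1" using R1(3) by (simp add: Suc_leI card_gt_0_iff)
      then have "A * card (R1 - F) \<ge> A" by simp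
      then show ?thesis unfolding A_def by linarith
    qed
  qed
  define g where "g x = x ^ (s+2) * (TT c R R1 A 1 (Suc s) x)^2 - TT c R R1 A 0 0 x * TT c R R1 A 2 s x" for x
  have "g x \<ge> 0" if x: "x > 0" for x
  proof -
    define w where "w r = (if r \<in> R1 then 1 / x ^ A else x)" for r
    have "\<forall>r\<in>R. w r > 0" using x unfolding w_def by auto
    then have h: "PP c w R 0 * PP c w R 2 \<le> (PP c w R 1)^2" using H by blast
    have e: "x ^ (A * card R1) * PP c w R i = TT c R R1 A i 0 x" for i
      unfolding w_def by (rule PP_eps[OF fin R1(1) x])
    have "(x ^ (A * card R1) * PP c w R 0) * (x ^ (A * card R1) * PP c w R 2) \<le> (x ^ (A * card R1) * PP c w R 1)^2"
    proof -
      have "(x ^ (A * card R1))^2 * (PP c w R 0 * PP c w R 2) \<le> (x ^ (A * card R1))^2 * (PP c w R 1)^2"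
        using h by (intro mult_left_mono) auto
      then show ?thesis by (simp add: power2_eq_square algebra_simps)
    qed
    then have i1: "TT c R R1 A 0 0 x * TT c R R1 A 2 0 x \<le> (TT c R R1 A 1 0 x)^2" unfolding e .
    have t2: "TT c R R1 A 2 0 x = x^s * TT c R R1 A 2 s x" by (rule TT_shift) (use sh2 in simp)
    have t1: "TT c R R1 A 1 0 x = x^(Suc s) * TT c R R1 A 1 (Suc s) x" by (rule TT_shift) (use sh1 in simp)
    have "x^s * (TT c R R1 A 0 0 x * TT c R R1 A 2 s x) \<le> x^s * (x ^ (s+2) * (TT c R R1 A 1 (Suc s) x)^2)"
      using i1 unfolding t1 t2 by (simp add: power2_eq_square power_add algebra_simps)
    then have "TT c R R1 A 0 0 x * TT c R R1 A 2 s x \<le> x ^ (s+2) * (TT c R R1 A 1 (Suc s) x)^2"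
      using x by (simp add: mult_le_cancel_left_pos)
    then show ?thesis unfolding g_def by simp
  qed
  moreover have "continuous_on UNIV g" unfolding g_def[abs_def] using TT_cont
    by (intro continuous_intros) auto
  ultimately have g0: "g 0 \<ge> 0" using lim0 by blast
  have T0: "TT c R R1 A 0 0 0 = c n" using TT_zero[OF fin R1(1), of A c 0] R1(2) unfolding A_def by simp
  have T2: "TT c R R1 A 2 s 0 \<ge> c (n+s+2)"
  proof -
    define F0 where "F0 = R1 \<union> G0"
    have F0: "F0 \<in> Pow R" "R1 - F0 = {}" "F0 - R1 = G0" "card F0 = n + s"
    proof -
      have "R1 \<inter> G0 = {}" using G0 by auto
      then have "card (R1 \<union> G0) = card R1 + card G0" using G0 R1 by (intro card_Un_disjoint) auto
      then show "F0 \<in> Pow R" "R1 - F0 = {}" "F0 - R1 = G0" "card F0 = n + s"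
        using G0 R1 unfolding F0_def by auto
    qed
    have "c (card F0 + 2) * 0 ^ (A * card (R1 - F0) + card (F0 - R1) - s) \<le> TT c R R1 A 2 s 0"
      unfolding TT_def
    proof (rule member_le_sum)
      fix F assume "F \<in> Pow R - {F0}"
      show "0 \<le> c (card F + 2) * 0 ^ (A * card (R1 - F) + card (F - R1) - s)"
        using nn by (simp add: power_0_left)
    qed (use F0 fin in auto)
    then show ?thesis using F0 G0 by (simp add: add.commute add.left_commute)
  qed
  have "g 0 = - (TT c R R1 A 0 0 0 * TT c R R1 A 2 s 0)" unfolding g_def by simp
  moreover have "TT c R R1 A 0 0 0 * TT c R R1 A 2 s 0 > 0"
    using T0 T2 cn ck by (intro mult_pos_pos) auto
  ultimately show False using g0 by simp
qed



lemma backward: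
  fixes E :: "'a set" and mu :: "'a set \<Rightarrow> real" and c :: "nat \<Rightarrow> real" and m :: nat
  assumes fin: "finite E" and m: "m = card E" "m \<ge> 1"
    and cnn: "\<And>k. k \<le> m \<Longrightarrow> c k \<ge> 0"
    and mu0: "\<And>F. F \<subseteq> E \<Longrightarrow> mu F = c (card F)"
    and cm: "cavity_monotone E mu"
  shows "\<forall>k. 0 < k \<and> k < m \<longrightarrow> (c k)\<^sup>2 \<ge> c (k - 1) * c (k + 1)"
    and "c 0 > 0" and "c 1 > 0"
    and "\<forall>i j k. i \<le> m \<and> c i > 0 \<and> k \<le> m \<and> c k > 0 \<and> i \<le> j \<and> j \<le> k \<longrightarrow> c j > 0"
proof -
  define cc where "cc k = (if k \<le> m then c k else 0)" for k
  have mu: "\<forall>F\<subseteq>E. mu F = cc (card F)"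
    using mu0 card_mono[OF fin] m(1) unfolding cc_def by auto
  have nn: "\<forall>n. cc n \<ge> 0" using cnn unfolding cc_def by auto
  have ray: "rayleigh E mu" and si: "size_increasing E mu" and pe: "mu {} > 0"
    using cm unfolding cavity_monotone_def by auto
  show c0: "c 0 > 0" using pe mu0[of "{}"] by simp
  have cc0: "cc 0 > 0" using c0 unfolding cc_def by simp
  have H: "\<forall>w. (\<forall>r\<in>E - {e,f}. w r > 0) \<longrightarrow> PP cc w (E - {e,f}) 0 * PP cc w (E - {e,f}) 2 \<le> (PP cc w (E - {e,f}) 1)^2"
    if "e \<in> E" "f \<in> E" "e \<noteq> f" for e f
    using ray_R[OF ray fin that mu nn cc0] by blast
  have two: "\<exists>e f. e \<in> E \<and> f \<in> E \<and> e \<noteq> f" if "m \<ge> 2"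
  proof -
    have "2 \<le> card E" using that m(1) by simp
    then obtain T where "T \<subseteq> E" "card T = 2" by (meson obtain_subset_with_card_n)
    then show ?thesis by (auto simp: card_2_iff)
  qed
  have cR: "card (E - {e,f}) = m - 2" if "e \<in> E" "f \<in> E" "e \<noteq> f" for e f
    using that fin m(1) by (simp add: card_Diff_subset)
  show lc: "\<forall>k. 0 < k \<and> k < m \<longrightarrow> (c k)\<^sup>2 \<ge> c (k - 1) * c (k + 1)"
  proof (intro allI impI)
    fix k assume k: "0 < k \<and> k < m"
    then obtain e f where ef: "e \<in> E" "f \<in> E" "e \<noteq> f" using two by fastforce
    have "cc (k-1) * cc (k-1+2) \<le> (cc (k-1+1))^2"
      using lc_from_ray[OF _ H[OF ef], of "k-1"] fin cR[OF ef] k by auto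
    moreover have "k - 1 \<le> m" "k - 1 + 1 = k" "k - 1 + 2 = k + 1" "k \<le> m" "k + 1 \<le> m" using k by auto
    ultimately show "(c k)\<^sup>2 \<ge> c (k - 1) * c (k + 1)" unfolding cc_def by (simp only: if_True)
  qed
  show iv: "\<forall>i j k. i \<le> m \<and> c i > 0 \<and> k \<le> m \<and> c k > 0 \<and> i \<le> j \<and> j \<le> k \<longrightarrow> c j > 0"
  proof (intro allI impI, rule ccontr)
    fix i j k assume h: "i \<le> m \<and> c i > 0 \<and> k \<le> m \<and> c k > 0 \<and> i \<le> j \<and> j \<le> k" and nj: "\<not> c j > 0"
    have jm: "j \<le> m" using h by auto
    then have cj: "c j = 0" using nj cnn[of j] by auto
    define j0 where "j0 = (LEAST t. t \<le> m \<and> c t = 0)"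
    have j0: "j0 \<le> m" "c j0 = 0" using LeastI[of "\<lambda>t. t \<le> m \<and> c t = 0" j] jm cj unfolding j0_def by auto
    have j0j: "j0 \<le> j" using Least_le[of "\<lambda>t. t \<le> m \<and> c t = 0" j] jm cj unfolding j0_def by auto
    have j0pos: "j0 \<ge> 1" using j0 c0 by (cases j0) auto
    have jk: "j < k" using h cj by (metis le_neq_implies_less less_irrefl)
    define k0 where "k0 = (LEAST t. j0 < t \<and> t \<le> m \<and> c t > 0)"
    have k0: "j0 < k0" "k0 \<le> m" "c k0 > 0" using LeastI[of "\<lambda>t. j0 < t \<and> t \<le> m \<and> c t > 0" k] h j0j jk unfolding k0_def by auto
    have cprev: "cc (j0 - 1) > 0"
    proof -
      have "\<not> (j0 - 1 \<le> m \<and> c (j0 - 1) = 0)" using not_less_Least[of "j0 - 1" "\<lambda>t. t \<le> m \<and> c t = 0"] j0pos unfolding j0_def by auto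
      then show ?thesis using j0 cnn[of "j0 - 1"] unfolding cc_def by auto
    qed
    have z: "\<forall>t. j0 - 1 < t \<and> t < (j0 - 1) + (k0 - j0 - 1) + 2 \<longrightarrow> cc t = 0"
    proof (intro allI impI)
      fix t assume t: "j0 - 1 < t \<and> t < (j0 - 1) + (k0 - j0 - 1) + 2"
      then have t': "j0 \<le> t" "t < k0" using j0pos k0 by auto
      show "cc t = 0"
      proof (cases "t = j0")
        case True then show ?thesis using j0 unfolding cc_def by simp
      next
        case False
        then have "\<not> (j0 < t \<and> t \<le> m \<and> c t > 0)" using not_less_Least[of t "\<lambda>t. j0 < t \<and> t \<le> m \<and> c t > 0"] t' unfolding k0_def by auto
        then show ?thesis using t' False cnn[of t] unfolding cc_def by auto
      qed
    qed
    have idx: "(j0 - 1) + (k0 - j0 - 1) + 2 = k0" using j0pos k0 by auto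
    have "m \<ge> 2" using k0 j0pos by auto
    then obtain e f where ef: "e \<in> E" "f \<in> E" "e \<noteq> f" using two by fastforce
    show False
    proof (rule gap_from_ray[OF _ H[OF ef], of "j0 - 1" "k0 - j0 - 1"])
      show "finite (E - {e,f})" using fin by simp
      show "j0 - 1 + (k0 - j0 - 1) \<le> card (E - {e, f})" using cR[OF ef] k0 j0pos by auto
      show "\<forall>t. 0 \<le> cc t" using nn by simp
      show "0 < cc (j0 - 1)" by (rule cprev)
      show "0 < cc (j0 - 1 + (k0 - j0 - 1) + 2)" unfolding idx using k0 unfolding cc_def by simp
      show "\<forall>t. j0 - 1 < t \<and> t < j0 - 1 + (k0 - j0 - 1) + 2 \<longrightarrow> cc t = 0" by (rule z)
    qed
  qed
  show "c 1 > 0"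
  proof (rule ccontr)
    assume n1: "\<not> c 1 > 0"
    have allz: "cc (Suc t) = 0" for t
    proof (cases "Suc t \<le> m")
      case True
      have "\<not> c (Suc t) > 0"
      proof
        assume "c (Suc t) > 0"
        then have "0 \<le> m \<and> c 0 > 0 \<and> Suc t \<le> m \<and> c (Suc t) > 0 \<and> 0 \<le> (1::nat) \<and> 1 \<le> Suc t"
          using c0 True by auto
        then have "c 1 > 0" using iv by blast
        then show False using n1 by simp
      qed
      then show ?thesis using cnn[of "Suc t"] True unfolding cc_def by auto
    next
      case False then show ?thesis unfolding cc_def by simp
    qed
    have "E \<noteq> {}" using m by auto
    then obtain e where e: "e \<in> E" by blast
    define w :: "'a \<Rightarrow> real" where "w r = 1" for r
    have pos: "\<forall>r\<in>E. w r > 0" unfolding w_def by simp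
    have Z: "Zfun E mu w > 0" by (rule Z_pos[OF fin pos mu nn cc0])
    have P1: "PP cc w (E-{e}) 1 = 0" unfolding PP_def using allz by simp
    have S1: "SS cc w (E-{e}) 1 = 0" unfolding SS_def using allz by simp
    have "Ew E mu w (\<lambda>F. real (card F) * (if e \<in> F then 1 else 0)) > Ew E mu w (\<lambda>F. real (card F)) * Pw E mu w (\<lambda>F. e \<in> F)"
      using si pos e unfolding size_increasing_def by blast
    then have "PP cc w (E-{e}) 0 * PP cc w (E-{e}) 1 + SS cc w (E-{e}) 1 * PP cc w (E-{e}) 0 - SS cc w (E-{e}) 0 * PP cc w (E-{e}) 1 > 0"
      using size_equiv[OF fin e mu] pos e Z by auto
    then show False unfolding P1 S1 by simp
  qed
qed

theorem mainTheorem3: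
  fixes E :: "'a set" and mu :: "'a set \<Rightarrow> real" and c :: "nat \<Rightarrow> real" and m :: nat
  assumes "finite E" and "m = card E" and "m \<ge> 1"
    and "\<And>k. k \<le> m \<Longrightarrow> c k \<ge> 0"
    and "\<And>F. F \<subseteq> E \<Longrightarrow> mu F = c (card F)"
  shows "(cavity_monotone E mu \<longleftrightarrow>
           ((\<forall>k. 0 < k \<and> k < m \<longrightarrow> (c k)\<^sup>2 \<ge> c (k - 1) * c (k + 1)) \<and>
            (let S = {k. k \<le> m \<and> c k > 0} in
               0 \<in> S \<and> 1 \<in> S \<and> (\<forall>i j k. i \<in> S \<and> k \<in> S \<and> i \<le> j \<and> j \<le> k \<longrightarrow> j \<in> S))))
         \<and> (\<forall>b::nat. b \<ge> 1 \<longrightarrow> cavity_monotone E (\<lambda>F. if card F \<le> b then 1 else 0))"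
proof (rule conjI, rule iffI)
  assume cm: "cavity_monotone E mu"
  note bw = backward[OF assms(1,2,3,4,5) cm]
  show "(\<forall>k. 0 < k \<and> k < m \<longrightarrow> (c k)\<^sup>2 \<ge> c (k - 1) * c (k + 1)) \<and>
            (let S = {k. k \<le> m \<and> c k > 0} in
               0 \<in> S \<and> 1 \<in> S \<and> (\<forall>i j k. i \<in> S \<and> k \<in> S \<and> i \<le> j \<and> j \<le> k \<longrightarrow> j \<in> S))"
  proof -
    have iv2: "\<forall>i j k. i \<in> {k. k \<le> m \<and> c k > 0} \<and> k \<in> {k. k \<le> m \<and> c k > 0} \<and> i \<le> j \<and> j \<le> k \<longrightarrow> j \<in> {k. k \<le> m \<and> c k > 0}"
    proof (intro allI impI)
      fix i j k assume "i \<in> {k. k \<le> m \<and> c k > 0} \<and> k \<in> {k. k \<le> m \<and> c k > 0} \<and> i \<le> j \<and> j \<le> k"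
      then have p: "i \<le> m \<and> c i > 0 \<and> k \<le> m \<and> c k > 0 \<and> i \<le> j \<and> j \<le> k" by simp
      then have "c j > 0" using bw(4) by blast
      moreover have "j \<le> m" using p by linarith
      ultimately show "j \<in> {k. k \<le> m \<and> c k > 0}" by simp
    qed
    have "0 \<in> {k. k \<le> m \<and> c k > 0}" "1 \<in> {k. k \<le> m \<and> c k > 0}" using bw(2,3) assms(3) by auto
    then show ?thesis unfolding Let_def using bw(1) iv2 by blast
  qed
next
  assume h: "(\<forall>k. 0 < k \<and> k < m \<longrightarrow> (c k)\<^sup>2 \<ge> c (k - 1) * c (k + 1)) \<and>
            (let S = {k. k \<le> m \<and> c k > 0} in
               0 \<in> S \<and> 1 \<in> S \<and> (\<forall>i j k. i \<in> S \<and> k \<in> S \<and> i \<le> j \<and> j \<le> k \<longrightarrow> j \<in> S))"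
  then have lc: "\<forall>k. 0 < k \<and> k < m \<longrightarrow> (c k)\<^sup>2 \<ge> c (k - 1) * c (k + 1)"
    and S0: "0 \<in> {k. k \<le> m \<and> c k > 0}" and S1: "1 \<in> {k. k \<le> m \<and> c k > 0}"
    and S2: "\<forall>i j k. i \<in> {k. k \<le> m \<and> c k > 0} \<and> k \<in> {k. k \<le> m \<and> c k > 0} \<and> i \<le> j \<and> j \<le> k \<longrightarrow> j \<in> {k. k \<le> m \<and> c k > 0}"
    unfolding Let_def by blast+
  have c0: "c 0 > 0" and c1: "c 1 > 0" using S0 S1 by auto
  have iv: "\<forall>i j k. i \<le> m \<and> c i > 0 \<and> k \<le> m \<and> c k > 0 \<and> i \<le> j \<and> j \<le> k \<longrightarrow> c j > 0"
  proof (intro allI impI)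
    fix i j k assume "i \<le> m \<and> c i > 0 \<and> k \<le> m \<and> c k > 0 \<and> i \<le> j \<and> j \<le> k"
    then have "i \<in> {k. k \<le> m \<and> c k > 0} \<and> k \<in> {k. k \<le> m \<and> c k > 0} \<and> i \<le> j \<and> j \<le> k" by simp
    then have "j \<in> {k. k \<le> m \<and> c k > 0}" using S2 by blast
    then show "c j > 0" by simp
  qed
  show "cavity_monotone E mu" by (rule forward[OF assms(1,2,3,4,5) lc c0 c1 iv])
next
  show "\<forall>b::nat. b \<ge> 1 \<longrightarrow> cavity_monotone E (\<lambda>F. if card F \<le> b then 1 else 0)"
  proof (intro allI impI)
  fix b :: nat assume b: "b \<ge> 1"
  define cb :: "nat \<Rightarrow> real" where "cb k = (if k \<le> b then 1 else 0)" for k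
  show "cavity_monotone E (\<lambda>F. if card F \<le> b then 1 else 0)"
  proof (rule forward[OF assms(1,2,3), of cb])
    show "\<And>k. k \<le> m \<Longrightarrow> 0 \<le> cb k" unfolding cb_def by simp
    show "\<And>F. F \<subseteq> E \<Longrightarrow> (if card F \<le> b then 1 else 0) = cb (card F)" unfolding cb_def by simp
    show "\<forall>k. 0 < k \<and> k < m \<longrightarrow> cb (k - 1) * cb (k + 1) \<le> (cb k)\<^sup>2" unfolding cb_def by auto
    show "0 < cb 0" "0 < cb 1" unfolding cb_def using b by auto
    show "\<forall>i j k. i \<le> m \<and> 0 < cb i \<and> k \<le> m \<and> 0 < cb k \<and> i \<le> j \<and> j \<le> k \<longrightarrow> 0 < cb j"
      unfolding cb_def by auto
  qed
qed
qed


end
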